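(* For each of the sets $\{000,100,110\}$ and $\{000,001,010,011\}$, and for every set obtained from either of them by any sequence of coordinate negations and coordinate permutations, $\rho(\mathcal S)=2$.
   Context: Binary triples $(x_1,x_2,x_3)\in\{0,1\}^3$ are written $x_1x_2x_3$. Let $\mathcal S\subseteq\{0,1\}^3$ be nonempty. A distribution scheme with domain $\mathcal S$ is a pair $(P_R,\psi)$ where $P_R$ is a probability distribution on a finite set $\mathcal R$ and $\psi:\mathcal S\times\mathcal R\to\mathcal W_{12}\times\mathcal W_{23}\times\mathcal W_{31}$ for finite share alphabets. Given $\mathbf x=(x_1,x_2,x_3)\in\mathcal S$, the shares are $(W_{12},W_{23},W_{31})=\psi(\mathbf x,R)$, $R\sim P_R$. Party $P_1$ sees $V_1=(W_{12},W_{31})$, $P_2$ sees $V_2=(W_{23},W_{12})$, $P_3$ sees $V_3=(W_{31},W_{23})$. It is a 3SS scheme if (Correctness) for each $i$ there is a function $\phi_i$ with $\Pr[\phi_i(V_i)=x_i]=1$ for every $\mathbf x\in\mathcal S$, and (Perfect privacy) for each $i$ and all $\mathbf x,\mathbf x'\in\mathcal S$ with $x_i=x'_i$, $V_i$ has the same distribution under secret $\mathbf x$ as under $\mathbf x'$. The randomness complexity $\rho(\mathcal S)$ is the minimum of $\log_2|\mathcal R|$ over all 3SS schemes with domain $\mathcal S$. A coordinate negation maps $\mathcal S$ to $\{\mathbf x\oplus e_i:\mathbf x\in\mathcal S\}$; a coordinate permutation permutes the three coordinates of every element. *)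

theory Defs
  imports "HOL-Library.Numeral_Type" "HOL-Probability.Probability_Mass_Function"
begin

text \<open>A binary triple x1 x2 x3 is a function from the three-element type 3 to bool;
  coordinate x1 is index 0, x2 is index 1, x3 is index 2.\<close>
type_synonym triple = "3 \<Rightarrow> bool"

definition trip :: "bool \<Rightarrow> bool \<Rightarrow> bool \<Rightarrow> triple" where
  "trip a b c = (\<lambda>i. if i = 0 then a else if i = 1 then b else c)"

text \<open>Shares (W12, W23, W31); share alphabets are encoded into nat (finite alphabets
  are automatic since the domain and the randomness set are finite).\<close>
type_synonym shares = "nat \<times> nat \<times> nat"

definition view :: "3 \<Rightarrow> shares \<Rightarrow> nat \<times> nat" where
  "view i w = (case w of (w12, w23, w31) \<Rightarrow>
      if i = 0 then (w12, w31) else if i = 1 then (w23, w12) else (w31, w23))"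

definition is_3SS :: "triple set \<Rightarrow> nat set \<Rightarrow> nat pmf \<Rightarrow> (triple \<Rightarrow> nat \<Rightarrow> shares) \<Rightarrow> bool" where
  "is_3SS S R P psi \<longleftrightarrow> finite R \<and> set_pmf P \<subseteq> R \<and>
     (\<forall>i. \<exists>phi. \<forall>x\<in>S. \<forall>r\<in>set_pmf P. phi (view i (psi x r)) = x i) \<and>
     (\<forall>i. \<forall>x\<in>S. \<forall>x'\<in>S. x i = x' i \<longrightarrow>
         map_pmf (\<lambda>r. view i (psi x r)) P = map_pmf (\<lambda>r. view i (psi x' r)) P)"

definition rho :: "triple set \<Rightarrow> real" where
  "rho S = Inf {log 2 (real (card R)) | R P psi. is_3SS S R P psi}"

definition negate_coord :: "3 \<Rightarrow> triple set \<Rightarrow> triple set" where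
  "negate_coord i S = (\<lambda>x. x(i := \<not> x i)) ` S"

definition permute_coords :: "(3 \<Rightarrow> 3) \<Rightarrow> triple set \<Rightarrow> triple set" where
  "permute_coords \<sigma> S = (\<lambda>x. x \<circ> \<sigma>) ` S"

inductive_set sym_orbit :: "triple set \<Rightarrow> triple set set" for S0 where
  base: "S0 \<in> sym_orbit S0"
| neg: "T \<in> sym_orbit S0 \<Longrightarrow> negate_coord i T \<in> sym_orbit S0"
| perm: "T \<in> sym_orbit S0 \<Longrightarrow> bij \<sigma> \<Longrightarrow> permute_coords \<sigma> T \<in> sym_orbit S0"

end

theory Submission
  imports Defs
begin


lemma three_cases: "(t::3) = 0 \<or> t = 1 \<or> t = 2"
proof (cases t)
  case (of_int z)
  then have "z = 0 \<or> z = 1 \<or> z = 2" by auto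
  then show ?thesis using of_int by auto
qed

definition sh :: "3 \<Rightarrow> shares \<Rightarrow> nat" where
  "sh t w = (case w of (a, b, c) \<Rightarrow> if t = 0 then b else if t = 1 then c else a)"

lemma view_eq_iff: "view t w = view t w' \<longleftrightarrow> (\<forall>s. s \<noteq> t \<longrightarrow> sh s w = sh s w')"
proof -
  obtain a b c where w: "w = (a,b,c)" by (cases w) auto
  obtain a' b' c' where w': "w' = (a',b',c')" by (cases w') auto
  have d: "(0::3) \<noteq> 1" "(0::3) \<noteq> 2" "(1::3) \<noteq> 2" by auto
  have all: "(\<forall>s::3. P s) \<longleftrightarrow> P 0 \<and> P 1 \<and> P 2" for P using three_cases by metis
  show ?thesis using three_cases[of t] d
    by (auto simp: view_def sh_def w w' all)
qed

lemma all3: "(\<forall>s::3. P s) \<longleftrightarrow> P 0 \<and> P 1 \<and> P 2"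
proof
  assume "P 0 \<and> P 1 \<and> P 2"
  then show "\<forall>s. P s" using three_cases by (intro allI) (elim conjE, metis)
qed simp

lemma priv_sh:
  assumes "map_pmf (\<lambda>r. view t (f r)) P = map_pmf (\<lambda>r. view t (g r)) P"
    and "s1 \<noteq> t" "s2 \<noteq> t"
  shows "map_pmf (\<lambda>r. (sh s1 (f r), sh s2 (f r))) P = map_pmf (\<lambda>r. (sh s1 (g r), sh s2 (g r))) P"
proof -
  define h where "h v = (sh s1 (SOME w. view t w = v), sh s2 (SOME w. view t w = v))" for v
  have hh: "h (view t w) = (sh s1 w, sh s2 w)" for w
  proof -
    have "view t (SOME w'. view t w' = view t w) = view t w" by (rule someI) simp
    then have "\<forall>s. s \<noteq> t \<longrightarrow> sh s (SOME w'. view t w' = view t w) = sh s w" by (simp only: view_eq_iff)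
    then show ?thesis unfolding h_def using assms(2,3) by simp
  qed
  have "map_pmf (\<lambda>r. (sh s1 (f r), sh s2 (f r))) P = map_pmf h (map_pmf (\<lambda>r. view t (f r)) P)"
    by (simp add: map_pmf_comp hh)
  also have "\<dots> = map_pmf h (map_pmf (\<lambda>r. view t (g r)) P)" using assms(1) by simp
  also have "\<dots> = map_pmf (\<lambda>r. (sh s1 (g r), sh s2 (g r))) P"
    by (simp add: map_pmf_comp hh)
  finally show ?thesis .
qed

lemma priv_sh1:
  assumes "map_pmf (\<lambda>r. view t (f r)) P = map_pmf (\<lambda>r. view t (g r)) P"
    and "s1 \<noteq> t"
  shows "map_pmf (\<lambda>r. sh s1 (f r)) P = map_pmf (\<lambda>r. sh s1 (g r)) P"
proof -
  have "map_pmf fst (map_pmf (\<lambda>r. (sh s1 (f r), sh s1 (f r))) P) = map_pmf fst (map_pmf (\<lambda>r. (sh s1 (g r), sh s1 (g r))) P)"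
    using priv_sh[OF assms(1) assms(2) assms(2)] by simp
  then show ?thesis by (simp add: map_pmf_comp)
qed



lemma fiber:
  fixes VA UA WA VB UB WB :: "nat \<Rightarrow> nat"
  assumes F1: "map_pmf (\<lambda>r. (VA r, UA r)) P = map_pmf (\<lambda>r. (VB r, UB r)) P"
    and F2: "map_pmf (\<lambda>r. (VA r, WA r)) P = map_pmf (\<lambda>r. (VB r, WB r)) P"
    and F3: "\<forall>r\<in>set_pmf P. \<forall>r'\<in>set_pmf P. \<not> (UA r' = UB r \<and> WA r' = WB r)"
    and r0: "r0 \<in> set_pmf P"
  shows "\<exists>r'\<in>set_pmf P. VB r' = VB r0 \<and> (UB r' \<noteq> UB r0 \<or> WB r' \<noteq> WB r0)"
proof (rule ccontr)
  assume "\<not> ?thesis"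
  then have H: "\<And>r'. r' \<in> set_pmf P \<Longrightarrow> VB r' = VB r0 \<Longrightarrow> UB r' = UB r0 \<and> WB r' = WB r0" by blast
  define v0 where "v0 = VB r0"
  define u0 where "u0 = UB r0"
  define w0 where "w0 = WB r0"
  let ?Q = "measure_pmf.prob P"
  define X1 where "X1 = {r. VA r = v0}"
  define X2 where "X2 = {r. VA r = v0 \<and> UA r = u0}"
  define X3 where "X3 = {r. VA r = v0 \<and> WA r = w0}"
  have m: "?Q {r. VB r = v0} > 0" using r0 by (intro measure_pmf_posI[of r0]) (auto simp: v0_def)
  have e1: "?Q X1 = ?Q {r. VB r = v0}"
  proof -
    have "measure_pmf.prob (map_pmf (\<lambda>r. (VA r, UA r)) P) ({v0} \<times> UNIV) = measure_pmf.prob (map_pmf (\<lambda>r. (VB r, UB r)) P) ({v0} \<times> UNIV)"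
      using F1 by simp
    then show ?thesis unfolding X1_def by (simp add: vimage_def)
  qed
  have e2: "?Q X2 = ?Q {r. VB r = v0}"
  proof -
    have "measure_pmf.prob (map_pmf (\<lambda>r. (VA r, UA r)) P) {(v0,u0)} = measure_pmf.prob (map_pmf (\<lambda>r. (VB r, UB r)) P) {(v0,u0)}"
      using F1 by simp
    then have "?Q X2 = ?Q {r. VB r = v0 \<and> UB r = u0}" unfolding X2_def by (simp add: vimage_def)
    also have "\<dots> = ?Q ({r. VB r = v0 \<and> UB r = u0} \<inter> set_pmf P)" by (simp add: measure_Int_set_pmf)
    also have "{r. VB r = v0 \<and> UB r = u0} \<inter> set_pmf P = {r. VB r = v0} \<inter> set_pmf P"
      unfolding v0_def u0_def using H by blast
    also have "?Q \<dots> = ?Q {r. VB r = v0}" by (simp add: measure_Int_set_pmf)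
    finally show ?thesis .
  qed
  have e3: "?Q X3 = ?Q {r. VB r = v0}"
  proof -
    have "measure_pmf.prob (map_pmf (\<lambda>r. (VA r, WA r)) P) {(v0,w0)} = measure_pmf.prob (map_pmf (\<lambda>r. (VB r, WB r)) P) {(v0,w0)}"
      using F2 by simp
    then have "?Q X3 = ?Q {r. VB r = v0 \<and> WB r = w0}" unfolding X3_def by (simp add: vimage_def)
    also have "\<dots> = ?Q ({r. VB r = v0 \<and> WB r = w0} \<inter> set_pmf P)" by (simp add: measure_Int_set_pmf)
    also have "{r. VB r = v0 \<and> WB r = w0} \<inter> set_pmf P = {r. VB r = v0} \<inter> set_pmf P"
      unfolding v0_def w0_def using H by blast
    also have "?Q \<dots> = ?Q {r. VB r = v0}" by (simp add: measure_Int_set_pmf)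
    finally show ?thesis .
  qed
  have "?Q (X1 - X2) = ?Q X1 - ?Q X2"
    by (rule measure_pmf.finite_measure_Diff) (auto simp: X1_def X2_def)
  then have "?Q (X1 - X2) = 0" using e1 e2 by simp
  then have d2: "set_pmf P \<inter> (X1 - X2) = {}" by (simp add: measure_pmf_zero_iff)
  have "?Q (X1 - X3) = ?Q X1 - ?Q X3"
    by (rule measure_pmf.finite_measure_Diff) (auto simp: X1_def X3_def)
  then have "?Q (X1 - X3) = 0" using e1 e3 by simp
  then have d3: "set_pmf P \<inter> (X1 - X3) = {}" by (simp add: measure_pmf_zero_iff)
  have "?Q X1 \<noteq> 0" using e1 m by simp
  then have "set_pmf P \<inter> X1 \<noteq> {}" by (simp add: measure_pmf_zero_iff)
  then obtain r' where r': "r' \<in> set_pmf P" "r' \<in> X1" by blast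
  then have "r' \<in> X2" "r' \<in> X3" using d2 d3 by auto
  then have "UA r' = UB r0 \<and> WA r' = WB r0" by (auto simp: X2_def X3_def u0_def w0_def)
  then show False using F3 r0 r'(1) by blast
qed


lemma all_three: "\<forall>s. s = (0::3) \<or> s = 1 \<or> s = 2" using three_cases by blast

lemma third: "(i::3) \<noteq> j \<Longrightarrow> \<exists>k. k \<noteq> i \<and> k \<noteq> j \<and> (\<forall>s. s = i \<or> s = j \<or> s = k)"
proof -
  assume ij: "i \<noteq> j"
  have c: "(\<forall>s. s = i \<or> s = j \<or> s = k) \<longleftrightarrow> (\<forall>s. s = (0::3) \<or> s = 1 \<or> s = 2)"
    if "{i,j,k} = {0,1,2}" for k
  proof -
    have "(\<forall>s. s = i \<or> s = j \<or> s = k) \<longleftrightarrow> (\<forall>s. s \<in> {i,j,k})" by simp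
    also have "\<dots> \<longleftrightarrow> (\<forall>s. s \<in> {0,1,2::3})" using that by simp
    also have "\<dots> \<longleftrightarrow> (\<forall>s. s = (0::3) \<or> s = 1 \<or> s = 2)" by simp
    finally show ?thesis .
  qed
  have "\<exists>k. k \<noteq> i \<and> k \<noteq> j \<and> {i,j,k} = {0,1,2}"
    using three_cases[of i] three_cases[of j] ij
    by (elim disjE) (simp_all, (rule exI[of _ 0] exI[of _ 1] exI[of _ 2], simp add: insert_commute)+)
  then show ?thesis using c all_three by blast
qed

lemma is3_corr:
  assumes "is_3SS S R P psi"
  shows "\<forall>i. \<exists>phi. \<forall>x\<in>S. \<forall>r\<in>set_pmf P. phi (view i (psi x r)) = x i"
  using assms unfolding is_3SS_def by (rule conjunct1[OF conjunct2[OF conjunct2]])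

lemma is3_priv:
  assumes "is_3SS S R P psi"
  shows "\<forall>i. \<forall>x\<in>S. \<forall>x'\<in>S. x i = x' i \<longrightarrow>
         map_pmf (\<lambda>r. view i (psi x r)) P = map_pmf (\<lambda>r. view i (psi x' r)) P"
  using assms unfolding is_3SS_def by (rule conjunct2[OF conjunct2[OF conjunct2]])

lemma corr_sh:
  assumes "is_3SS S R P psi" "x \<in> S" "x' \<in> S" "r \<in> set_pmf P" "r' \<in> set_pmf P"
    and "\<forall>s. s \<noteq> t \<longrightarrow> sh s (psi x r) = sh s (psi x' r')"
  shows "x t = x' t"
proof -
  obtain phi where phi: "\<forall>x\<in>S. \<forall>r\<in>set_pmf P. phi (view t (psi x r)) = x t"
    using is3_corr[OF assms(1), rule_format, of t] by blast
  have 1: "phi (view t (psi x r)) = x t" using phi assms(2,4) by blast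
  have 2: "phi (view t (psi x' r')) = x' t" using phi assms(3,5) by blast
  have "view t (psi x r) = view t (psi x' r')" using assms(6) by (simp only: view_eq_iff)
  then show ?thesis using 1 2 by simp
qed

lemma priv_view:
  assumes "is_3SS S R P psi" "x \<in> S" "x' \<in> S" "x t = x' t"
  shows "map_pmf (\<lambda>r. view t (psi x r)) P = map_pmf (\<lambda>r. view t (psi x' r)) P"
  using is3_priv[OF assms(1), rule_format, OF assms(2,3,4)] .

lemma lower:
  assumes H: "is_3SS S R P psi" and S: "a \<in> S" "b \<in> S" "c \<in> S" and ij: "i \<noteq> j"
    and ab: "a i \<noteq> b i" "\<forall>t. t \<noteq> i \<longrightarrow> a t = b t"
    and bc: "b j \<noteq> c j" "\<forall>t. t \<noteq> j \<longrightarrow> b t = c t"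
  shows "4 \<le> card R"
proof -
  obtain k where k: "k \<noteq> i" "k \<noteq> j" "\<forall>s. s = i \<or> s = j \<or> s = k" using third[OF ij] by blast
  have F1: "map_pmf (\<lambda>r. (sh i (psi a r), sh k (psi a r))) P = map_pmf (\<lambda>r. (sh i (psi b r), sh k (psi b r))) P"
    by (rule priv_sh[OF priv_view[OF H S(1,2), of j]]) (use ab ij k in auto)
  have F2: "map_pmf (\<lambda>r. (sh i (psi a r), sh j (psi a r))) P = map_pmf (\<lambda>r. (sh i (psi b r), sh j (psi b r))) P"
    by (rule priv_sh[OF priv_view[OF H S(1,2), of k]]) (use ab ij k in auto)
  have F3: "\<forall>r\<in>set_pmf P. \<forall>r'\<in>set_pmf P. \<not> (sh k (psi a r') = sh k (psi b r) \<and> sh j (psi a r') = sh j (psi b r))"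
  proof (intro ballI notI)
    fix r r' assume r: "r \<in> set_pmf P" "r' \<in> set_pmf P" and e: "sh k (psi a r') = sh k (psi b r) \<and> sh j (psi a r') = sh j (psi b r)"
    have "\<forall>s. s \<noteq> i \<longrightarrow> sh s (psi a r') = sh s (psi b r)"
    proof (intro allI impI)
      fix s assume "s \<noteq> i" then have "s = j \<or> s = k" using k(3) by blast
      then show "sh s (psi a r') = sh s (psi b r)" using e by auto
    qed
    then have "a i = b i" using corr_sh[OF H S(1,2) r(2,1)] by blast
    then show False using ab by simp
  qed
  have fib: "\<exists>r'\<in>set_pmf P. sh i (psi b r') = sh i (psi b r0) \<and> (sh k (psi b r') \<noteq> sh k (psi b r0) \<or> sh j (psi b r') \<noteq> sh j (psi b r0))"
    if "r0 \<in> set_pmf P" for r0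
    using fiber[where VA="\<lambda>r. sh i (psi a r)" and UA="\<lambda>r. sh k (psi a r)" and WA="\<lambda>r. sh j (psi a r)"
        and VB="\<lambda>r. sh i (psi b r)" and UB="\<lambda>r. sh k (psi b r)" and WB="\<lambda>r. sh j (psi b r)", OF F1 F2 F3 that] .
  have N1: "map_pmf (\<lambda>r. sh i (psi b r)) P = map_pmf (\<lambda>r. sh i (psi c r)) P"
    by (rule priv_sh1[OF priv_view[OF H S(2,3), of k]]) (use bc ij k in auto)
  have N2: "map_pmf (\<lambda>r. sh k (psi b r)) P = map_pmf (\<lambda>r. sh k (psi c r)) P"
    by (rule priv_sh1[OF priv_view[OF H S(2,3), of i]]) (use bc ij k in auto)
  have N3: "\<not> (sh i (psi c r') = sh i (psi b r) \<and> sh k (psi c r') = sh k (psi b r))"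
    if "r \<in> set_pmf P" "r' \<in> set_pmf P" for r r'
  proof
    assume e: "sh i (psi c r') = sh i (psi b r) \<and> sh k (psi c r') = sh k (psi b r)"
    have "\<forall>s. s \<noteq> j \<longrightarrow> sh s (psi c r') = sh s (psi b r)"
    proof (intro allI impI)
      fix s assume "s \<noteq> j" then have "s = i \<or> s = k" using k(3) by blast
      then show "sh s (psi c r') = sh s (psi b r)" using e by auto
    qed
    then have "c j = b j" using corr_sh[OF H S(3,2) that(2,1)] by blast
    then show False using bc by simp
  qed
  obtain r0 where r0: "r0 \<in> set_pmf P" using set_pmf_not_empty[of P] by blast
  have "\<exists>r1\<in>set_pmf P. sh i (psi b r1) \<noteq> sh i (psi b r0)"
  proof (rule ccontr)
    assume "\<not> ?thesis"
    then have all: "\<forall>r\<in>set_pmf P. sh i (psi b r) = sh i (psi b r0)" by blast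
    have "sh k (psi b r0) \<in> set_pmf (map_pmf (\<lambda>r. sh k (psi b r)) P)" using r0 by simp
    then have "sh k (psi b r0) \<in> set_pmf (map_pmf (\<lambda>r. sh k (psi c r)) P)" using N2 by simp
    then obtain r' where r': "r' \<in> set_pmf P" "sh k (psi c r') = sh k (psi b r0)" by auto
    have "sh i (psi c r') \<in> set_pmf (map_pmf (\<lambda>r. sh i (psi c r)) P)" using r' by simp
    then have "sh i (psi c r') \<in> set_pmf (map_pmf (\<lambda>r. sh i (psi b r)) P)" using N1 by simp
    then obtain r'' where "r'' \<in> set_pmf P" "sh i (psi c r') = sh i (psi b r'')" by auto
    then have "sh i (psi c r') = sh i (psi b r0)" using all by simp
    then show False using N3[OF r0 r'(1)] r'(2) by simp
  qed
  then obtain r1 where r1: "r1 \<in> set_pmf P" "sh i (psi b r1) \<noteq> sh i (psi b r0)" by blast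
  obtain r0' where r0': "r0' \<in> set_pmf P" "sh i (psi b r0') = sh i (psi b r0)"
    "sh k (psi b r0') \<noteq> sh k (psi b r0) \<or> sh j (psi b r0') \<noteq> sh j (psi b r0)" using fib[OF r0] by blast
  obtain r1' where r1': "r1' \<in> set_pmf P" "sh i (psi b r1') = sh i (psi b r1)"
    "sh k (psi b r1') \<noteq> sh k (psi b r1) \<or> sh j (psi b r1') \<noteq> sh j (psi b r1)" using fib[OF r1(1)] by blast
  have ne: "r0 \<noteq> r0'" "r1 \<noteq> r1'" using r0'(3) r1'(3) by auto
  have ne2: "r0 \<noteq> r1" "r0 \<noteq> r1'" "r0' \<noteq> r1" "r0' \<noteq> r1'" using r1(2) r0'(2) r1'(2) by auto
  have c4: "card {r0, r0', r1, r1'} = 4" using ne ne2 by auto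
  have HR: "set_pmf P \<subseteq> R" "finite R" using H unfolding is_3SS_def by (blast, blast)
  have sub: "{r0, r0', r1, r1'} \<subseteq> R" using HR(1) r0 r0'(1) r1(1) r1'(1) by blast
  show ?thesis using card_mono[OF HR(2) sub] c4 by simp
qed



definition mk :: "(3 \<Rightarrow> nat) \<Rightarrow> shares" where "mk s = (s 2, s 0, s 1)"

lemma sh_mk[simp]: "sh t (mk s) = s t"
  using three_cases[of t] by (auto simp: sh_def mk_def)

lemma priv_perm:
  assumes "finite A" "A \<noteq> {}" "inj_on \<pi> A" "\<pi> ` A = A" "\<forall>r\<in>A. f r = g (\<pi> r)"
  shows "map_pmf f (pmf_of_set A) = map_pmf g (pmf_of_set A)"
proof -
  have "map_pmf g (pmf_of_set A) = map_pmf g (map_pmf \<pi> (pmf_of_set A))"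
    using map_pmf_of_set_inj[OF assms(3,2,1)] assms(4) by simp
  also have "\<dots> = map_pmf (\<lambda>r. g (\<pi> r)) (pmf_of_set A)" by (simp add: map_pmf_comp)
  also have "\<dots> = map_pmf f (pmf_of_set A)"
    by (rule map_pmf_cong) (use assms in auto)
  finally show ?thesis by simp
qed

lemma corr_from:
  assumes "\<forall>x\<in>S. \<forall>x'\<in>S. \<forall>r\<in>set_pmf P. \<forall>r'\<in>set_pmf P.
     (\<forall>s. s \<noteq> t \<longrightarrow> sh s (psi x r) = sh s (psi x' r')) \<longrightarrow> x t = x' t"
  shows "\<exists>phi. \<forall>x\<in>S. \<forall>r\<in>set_pmf P. phi (view t (psi x r)) = x t"
proof -
  define phi where "phi v = (SOME b. \<exists>x\<in>S. \<exists>r\<in>set_pmf P. view t (psi x r) = v \<and> x t = b)" for v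
  have "phi (view t (psi x r)) = x t" if "x \<in> S" "r \<in> set_pmf P" for x r
  proof -
    have "\<exists>x'\<in>S. \<exists>r'\<in>set_pmf P. view t (psi x' r') = view t (psi x r) \<and> x' t = phi (view t (psi x r))"
      unfolding phi_def by (rule someI_ex) (use that in blast)
    then obtain x' r' where "x' \<in> S" "r' \<in> set_pmf P" "view t (psi x' r') = view t (psi x r)"
      "x' t = phi (view t (psi x r))" by blast
    then have "\<forall>s. s \<noteq> t \<longrightarrow> sh s (psi x' r') = sh s (psi x r)" by (simp only: view_eq_iff)
    then have "x' t = x t" using assms \<open>x' \<in> S\<close> \<open>r' \<in> set_pmf P\<close> that by blast
    then show ?thesis using \<open>x' t = phi (view t (psi x r))\<close> by simp
  qed
  then show ?thesis by blast
qed

definition flip1 :: "nat \<Rightarrow> nat" where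
  "flip1 r = (if r = 0 then 1 else if r = 1 then 0 else if r = 2 then 3 else 2)"
definition flip2 :: "nat \<Rightarrow> nat" where
  "flip2 r = (if r = 0 then 2 else if r = 1 then 3 else if r = 2 then 0 else 1)"

lemma flip1_ok: "inj_on flip1 {0,1,2,3}" "flip1 ` {0,1,2,3} = {0,1,2,3}"
  by (auto simp: flip1_def inj_on_def)
lemma flip2_ok: "inj_on flip2 {0,1,2,3}" "flip2 ` {0,1,2,3} = {0,1,2,3}"
  by (auto simp: flip2_def inj_on_def)

definition fpsi :: "3 \<Rightarrow> 3 \<Rightarrow> 3 \<Rightarrow> triple \<Rightarrow> nat \<Rightarrow> shares" where
  "fpsi k i j x r = mk (\<lambda>t. if t = k then 2 * ((r mod 2 + of_bool (x i)) mod 2) + (r div 2 + of_bool (x j)) mod 2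
     else if t = i then r div 2 else r mod 2)"

lemma r4: "r \<in> {0,1,2,3::nat} \<Longrightarrow> r = 0 \<or> r = 1 \<or> r = 2 \<or> r = 3" by auto

lemma flip1_prop: "r \<in> {0,1,2,3::nat} \<Longrightarrow> flip1 r div 2 = r div 2 \<and> (flip1 r mod 2 + of_bool (\<not> b)) mod 2 = (r mod 2 + of_bool b) mod 2"
  by (drule r4, cases b) (auto simp: flip1_def)
lemma flip2_prop: "r \<in> {0,1,2,3::nat} \<Longrightarrow> flip2 r mod 2 = r mod 2 \<and> (flip2 r div 2 + of_bool (\<not> b)) mod 2 = (r div 2 + of_bool b) mod 2"
  by (drule r4, cases b) (auto simp: flip2_def)

lemma dig: "(a::nat) < 2 \<Longrightarrow> b < 2 \<Longrightarrow> a' < 2 \<Longrightarrow> b' < 2 \<Longrightarrow> 2*a+b = 2*a'+b' \<Longrightarrow> a = a' \<and> b = b'"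
  by presburger

lemma xc: "((m::nat) + of_bool p) mod 2 = (m + of_bool q) mod 2 \<Longrightarrow> p = q"
  by (cases p; cases q; simp; presburger)

lemma inj_id4: "inj_on id {0,1,2,3::nat}" "id ` {0,1,2,3::nat} = {0,1,2,3}" by auto

lemma face_scheme:
  assumes k: "k \<noteq> i" "k \<noteq> j" "i \<noteq> j" "\<forall>s. s = i \<or> s = j \<or> s = k"
  shows "is_3SS {x. x k = e} {0,1,2,3} (pmf_of_set {0,1,2,3}) (fpsi k i j)"
proof -
  let ?R = "{0,1,2,3::nat}"
  have shk: "sh k (fpsi k i j x r) = 2 * ((r mod 2 + of_bool (x i)) mod 2) + (r div 2 + of_bool (x j)) mod 2" for x r
    by (simp add: fpsi_def)
  have shi: "sh i (fpsi k i j x r) = r div 2" for x r using k by (simp add: fpsi_def)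
  have shj: "sh j (fpsi k i j x r) = r mod 2" for x r using k by (simp add: fpsi_def)
  have tc: "t = k \<or> t = i \<or> t = j" for t using k(4) by blast
  have sp: "set_pmf (pmf_of_set ?R) = ?R" by simp
  have corr: "\<exists>phi. \<forall>x\<in>{x. x k = e}. \<forall>r\<in>set_pmf (pmf_of_set ?R). phi (view t (fpsi k i j x r)) = x t" for t
  proof (rule corr_from, unfold sp, intro ballI impI)
    fix x x' r r' assume x: "x \<in> {x. x k = e}" "x' \<in> {x. x k = e}" and r: "r \<in> ?R" "r' \<in> ?R"
      and e: "\<forall>s. s \<noteq> t \<longrightarrow> sh s (fpsi k i j x r) = sh s (fpsi k i j x' r')"
    have "t = k \<or> t = i \<or> t = j" by (rule tc)
    moreover
    { assume "t = k" then have "x t = x' t" using x by simp }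
    moreover
    { assume t: "t = i"
      have 1: "sh j (fpsi k i j x r) = sh j (fpsi k i j x' r')" "sh k (fpsi k i j x r) = sh k (fpsi k i j x' r')"
        using e t k by auto
      then have m: "r mod 2 = r' mod 2" using shj by simp
      have "(r mod 2 + of_bool (x i)) mod 2 = (r' mod 2 + of_bool (x' i)) mod 2"
        using dig[OF _ _ _ _ 1(2)[unfolded shk]] by simp
      then have "(r mod 2 + of_bool (x i)) mod 2 = (r mod 2 + of_bool (x' i)) mod 2" using m by simp
      then have "x t = x' t" using t xc by blast }
    moreover
    { assume t: "t = j"
      have 1: "sh i (fpsi k i j x r) = sh i (fpsi k i j x' r')" "sh k (fpsi k i j x r) = sh k (fpsi k i j x' r')"
        using e t k by auto
      then have m: "r div 2 = r' div 2" using shi by simp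
      have "(r div 2 + of_bool (x j)) mod 2 = (r' div 2 + of_bool (x' j)) mod 2"
        using dig[OF _ _ _ _ 1(2)[unfolded shk]] by simp
      then have "(r div 2 + of_bool (x j)) mod 2 = (r div 2 + of_bool (x' j)) mod 2" using m by simp
      then have "x t = x' t" using t xc by blast }
    ultimately show "x t = x' t" by blast
  qed
  have priv: "map_pmf (\<lambda>r. view t (fpsi k i j x r)) (pmf_of_set ?R) = map_pmf (\<lambda>r. view t (fpsi k i j x' r)) (pmf_of_set ?R)"
    if xt: "x t = x' t" for t x x'
  proof -
    have "t = k \<or> t = i \<or> t = j" by (rule tc)
    moreover
    { assume t: "t = k"
      have "view t (fpsi k i j x r) = view t (fpsi k i j x' r)" for r
        unfolding view_eq_iff
      proof (intro allI impI)
        fix s assume "s \<noteq> t" then have "s = i \<or> s = j" using t k(4) by blast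
        then show "sh s (fpsi k i j x r) = sh s (fpsi k i j x' r)" using shi shj by auto
      qed
      then have ?thesis by simp }
    moreover
    { assume t: "t = i"
      define \<pi> where "\<pi> = (if x j = x' j then id else flip2)"
      have po: "inj_on \<pi> ?R" "\<pi> ` ?R = ?R" unfolding \<pi>_def using flip2_ok inj_id4 by auto
      have "\<forall>r\<in>?R. view t (fpsi k i j x r) = view t (fpsi k i j x' (\<pi> r))"
      proof
        fix r assume r: "r \<in> ?R"
        have a: "\<pi> r mod 2 = r mod 2" using flip2_prop[OF r] by (simp add: \<pi>_def)
        have b: "(\<pi> r div 2 + of_bool (x' j)) mod 2 = (r div 2 + of_bool (x j)) mod 2"
        proof (cases "x j = x' j")
          case True then show ?thesis by (simp add: \<pi>_def)
        next
          case False then have "x' j = (\<not> x j)" by simp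
          then show ?thesis using False flip2_prop[OF r, of "x j"] by (simp add: \<pi>_def)
        qed
        show "view t (fpsi k i j x r) = view t (fpsi k i j x' (\<pi> r))"
          unfolding view_eq_iff
        proof (intro allI impI)
          fix s assume "s \<noteq> t" then have "s = j \<or> s = k" using t k(4) by blast
          then show "sh s (fpsi k i j x r) = sh s (fpsi k i j x' (\<pi> r))"
            using shj shk a b xt t by auto
        qed
      qed
      then have ?thesis by (intro priv_perm[OF _ _ po]) auto }
    moreover
    { assume t: "t = j"
      define \<pi> where "\<pi> = (if x i = x' i then id else flip1)"
      have po: "inj_on \<pi> ?R" "\<pi> ` ?R = ?R" unfolding \<pi>_def using flip1_ok inj_id4 by auto
      have "\<forall>r\<in>?R. view t (fpsi k i j x r) = view t (fpsi k i j x' (\<pi> r))"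
      proof
        fix r assume r: "r \<in> ?R"
        have a: "\<pi> r div 2 = r div 2" using flip1_prop[OF r] by (simp add: \<pi>_def)
        have b: "(\<pi> r mod 2 + of_bool (x' i)) mod 2 = (r mod 2 + of_bool (x i)) mod 2"
        proof (cases "x i = x' i")
          case True then show ?thesis by (simp add: \<pi>_def)
        next
          case False then have "x' i = (\<not> x i)" by simp
          then show ?thesis using False flip1_prop[OF r, of "x i"] by (simp add: \<pi>_def)
        qed
        show "view t (fpsi k i j x r) = view t (fpsi k i j x' (\<pi> r))"
          unfolding view_eq_iff
        proof (intro allI impI)
          fix s assume "s \<noteq> t" then have "s = i \<or> s = k" using t k(4) by blast
          then show "sh s (fpsi k i j x r) = sh s (fpsi k i j x' (\<pi> r))"
            using shi shk a b xt t by auto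
        qed
      qed
      then have ?thesis by (intro priv_perm[OF _ _ po]) auto }
    ultimately show ?thesis by blast
  qed
  show ?thesis unfolding is_3SS_def
  proof (intro conjI allI ballI impI)
    show "finite ?R" by simp
    show "set_pmf (pmf_of_set ?R) \<subseteq> ?R" by simp
  next
    fix t show "\<exists>phi. \<forall>x\<in>{x. x k = e}. \<forall>r\<in>set_pmf (pmf_of_set ?R). phi (view t (fpsi k i j x r)) = x t"
      by (rule corr)
  next
    fix t :: 3 and x x' :: triple assume "x t = x' t"
    then show "map_pmf (\<lambda>r. view t (fpsi k i j x r)) (pmf_of_set ?R) = map_pmf (\<lambda>r. view t (fpsi k i j x' r)) (pmf_of_set ?R)"
      by (rule priv)
  qed
qed



definition has_path :: "triple set \<Rightarrow> bool" where
  "has_path S \<longleftrightarrow> (\<exists>a b c i j. a \<in> S \<and> b \<in> S \<and> c \<in> S \<and> i \<noteq> j \<and> a i \<noteq> b i \<and> (\<forall>t. t \<noteq> i \<longrightarrow> a t = b t)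
      \<and> b j \<noteq> c j \<and> (\<forall>t. t \<noteq> j \<longrightarrow> b t = c t))"

definition in_face :: "triple set \<Rightarrow> bool" where
  "in_face S \<longleftrightarrow> (\<exists>k e. S \<subseteq> {x. x k = e})"

lemma neg_eq: "(x(i := \<not> x i)) t = (y(i := \<not> y i)) t \<longleftrightarrow> x t = y t"
  by auto

lemma path_neg: "has_path T \<Longrightarrow> has_path (negate_coord i0 T)"
proof -
  assume "has_path T"
  then obtain a b c i j where p: "a \<in> T" "b \<in> T" "c \<in> T" "i \<noteq> j" "a i \<noteq> b i" "\<forall>t. t \<noteq> i \<longrightarrow> a t = b t"
      "b j \<noteq> c j" "\<forall>t. t \<noteq> j \<longrightarrow> b t = c t" unfolding has_path_def by (elim exE conjE) (rule that)
  let ?f = "\<lambda>x::triple. x(i0 := \<not> x i0)"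
  show ?thesis unfolding has_path_def negate_coord_def
    apply (rule exI[of _ "?f a"], rule exI[of _ "?f b"], rule exI[of _ "?f c"], rule exI[of _ i], rule exI[of _ j])
    using p by (simp only: neg_eq) blast
qed

lemma face_neg: "in_face T \<Longrightarrow> in_face (negate_coord i0 T)"
proof -
  assume "in_face T"
  then obtain k e where ke: "T \<subseteq> {x. x k = e}" unfolding in_face_def by (elim exE) (rule that)
  have "negate_coord i0 T \<subseteq> {x. x k = (if k = i0 then \<not> e else e)}"
  proof
    fix y assume "y \<in> negate_coord i0 T"
    then obtain x where x: "x \<in> T" "y = x(i0 := \<not> x i0)" unfolding negate_coord_def by (rule imageE) simp
    have "x k = e" using ke x(1) by blast
    then show "y \<in> {x. x k = (if k = i0 then \<not> e else e)}" using x(2) by (cases "k = i0") simp_all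
  qed
  then show ?thesis unfolding in_face_def by (intro exI)
qed

lemma path_perm: "has_path T \<Longrightarrow> bij \<sigma> \<Longrightarrow> has_path (permute_coords \<sigma> T)"
proof -
  assume "has_path T" and s: "bij \<sigma>"
  then obtain a b c i j where p: "a \<in> T" "b \<in> T" "c \<in> T" "i \<noteq> j" "a i \<noteq> b i" "\<forall>t. t \<noteq> i \<longrightarrow> a t = b t"
      "b j \<noteq> c j" "\<forall>t. t \<noteq> j \<longrightarrow> b t = c t" unfolding has_path_def by (elim exE conjE) (rule that)
  have si: "\<sigma> (inv \<sigma> y) = y" for y using s by (simp add: bij_is_surj surj_f_inv_f)
  have ne: "\<sigma> t \<noteq> y" if "t \<noteq> inv \<sigma> y" for t y
  proof
    assume "\<sigma> t = y" then have "inv \<sigma> (\<sigma> t) = inv \<sigma> y" by simp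
    then show False using that s by (simp add: bij_is_inj)
  qed
  have nij: "inv \<sigma> i \<noteq> inv \<sigma> j"
  proof
    assume "inv \<sigma> i = inv \<sigma> j" then have "\<sigma> (inv \<sigma> i) = \<sigma> (inv \<sigma> j)" by simp
    then show False using si p(4) by simp
  qed
  have m: "a \<circ> \<sigma> \<in> permute_coords \<sigma> T" "b \<circ> \<sigma> \<in> permute_coords \<sigma> T" "c \<circ> \<sigma> \<in> permute_coords \<sigma> T"
    unfolding permute_coords_def using p(1-3) by blast+
  have 1: "(a \<circ> \<sigma>) (inv \<sigma> i) \<noteq> (b \<circ> \<sigma>) (inv \<sigma> i)" using p(5) si by simp
  have 2: "\<forall>t. t \<noteq> inv \<sigma> i \<longrightarrow> (a \<circ> \<sigma>) t = (b \<circ> \<sigma>) t"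
  proof (intro allI impI)
    fix t assume "t \<noteq> inv \<sigma> i" then have "\<sigma> t \<noteq> i" by (rule ne)
    then show "(a \<circ> \<sigma>) t = (b \<circ> \<sigma>) t" using p(6) by simp
  qed
  have 3: "(b \<circ> \<sigma>) (inv \<sigma> j) \<noteq> (c \<circ> \<sigma>) (inv \<sigma> j)" using p(7) si by simp
  have 4: "\<forall>t. t \<noteq> inv \<sigma> j \<longrightarrow> (b \<circ> \<sigma>) t = (c \<circ> \<sigma>) t"
  proof (intro allI impI)
    fix t assume "t \<noteq> inv \<sigma> j" then have "\<sigma> t \<noteq> j" by (rule ne)
    then show "(b \<circ> \<sigma>) t = (c \<circ> \<sigma>) t" using p(8) by simp
  qed
  show ?thesis unfolding has_path_def
    apply (rule exI[of _ "a \<circ> \<sigma>"], rule exI[of _ "b \<circ> \<sigma>"], rule exI[of _ "c \<circ> \<sigma>"], rule exI[of _ "inv \<sigma> i"], rule exI[of _ "inv \<sigma> j"])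
    using m nij 1 2 3 4 by (intro conjI) assumption+
qed

lemma face_perm: "in_face T \<Longrightarrow> bij \<sigma> \<Longrightarrow> in_face (permute_coords \<sigma> T)"
proof -
  assume "in_face T" and s: "bij \<sigma>"
  then obtain k e where ke: "T \<subseteq> {x. x k = e}" unfolding in_face_def by (elim exE) (rule that)
  have si: "\<sigma> (inv \<sigma> y) = y" for y using s by (simp add: bij_is_surj surj_f_inv_f)
  have "permute_coords \<sigma> T \<subseteq> {x. x (inv \<sigma> k) = e}"
  proof
    fix y assume "y \<in> permute_coords \<sigma> T"
    then obtain x where x: "x \<in> T" "y = x \<circ> \<sigma>" unfolding permute_coords_def by (rule imageE) simp
    have "x k = e" using ke x(1) by blast
    then show "y \<in> {x. x (inv \<sigma> k) = e}" using x(2) si by simp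
  qed
  then show ?thesis unfolding in_face_def by (intro exI)
qed

lemma orbit_inv:
  assumes "T \<in> sym_orbit S0" "has_path S0" "in_face S0"
  shows "has_path T \<and> in_face T"
  using assms by (induction rule: sym_orbit.induct) (auto intro: path_neg face_neg path_perm face_perm)

lemma restrict:
  assumes H: "is_3SS F R P psi" and sub: "S \<subseteq> F"
  shows "is_3SS S R P psi"
proof -
  have a1: "finite R" using H unfolding is_3SS_def by (rule conjunct1)
  have a2: "set_pmf P \<subseteq> R" using H unfolding is_3SS_def by (rule conjunct1[OF conjunct2])
  have c: "\<forall>i. \<exists>phi. \<forall>x\<in>S. \<forall>r\<in>set_pmf P. phi (view i (psi x r)) = x i"
  proof
    fix i
    obtain phi where phi: "\<forall>x\<in>F. \<forall>r\<in>set_pmf P. phi (view i (psi x r)) = x i"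
      using is3_corr[OF H, rule_format, of i] by (elim exE) (rule that)
    have "\<forall>x\<in>S. \<forall>r\<in>set_pmf P. phi (view i (psi x r)) = x i"
    proof (intro ballI)
      fix x r assume "x \<in> S" "r \<in> set_pmf P"
      then show "phi (view i (psi x r)) = x i" using phi[rule_format, of x r] sub by (simp add: subset_iff)
    qed
    then show "\<exists>phi. \<forall>x\<in>S. \<forall>r\<in>set_pmf P. phi (view i (psi x r)) = x i" by (intro exI)
  qed
  have p: "\<forall>i. \<forall>x\<in>S. \<forall>x'\<in>S. x i = x' i \<longrightarrow>
         map_pmf (\<lambda>r. view i (psi x r)) P = map_pmf (\<lambda>r. view i (psi x' r)) P"
  proof (intro allI ballI impI)
    fix i x x' assume xs: "x \<in> S" "x' \<in> S" and e: "x i = x' i"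
    have "x \<in> F" "x' \<in> F" using xs sub by (simp_all add: subset_iff)
    then show "map_pmf (\<lambda>r. view i (psi x r)) P = map_pmf (\<lambda>r. view i (psi x' r)) P"
      using is3_priv[OF H, rule_format] e by blast
  qed
  show ?thesis unfolding is_3SS_def using a1 a2 c p by (intro conjI)
qed

lemma log4: "log 2 (4::real) = 2"
proof -
  have "log 2 ((2::real) ^ 2) = real (2::nat)" by (rule log_pow_cancel) simp_all
  then show ?thesis by simp
qed

lemma rho_2:
  assumes "has_path S" "in_face S"
  shows "rho S = 2"
  unfolding rho_def
proof (rule cInf_eq_minimum)
  obtain k e where ke: "S \<subseteq> {x. x k = e}" using assms(2) unfolding in_face_def by (elim exE) (rule that)
  have "\<exists>i::3. i \<noteq> k"
  proof (cases "k = 0")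
    case True then show ?thesis by (intro exI[of _ 1]) simp
  next
    case False then show ?thesis by (intro exI[of _ 0]) simp
  qed
  then obtain i where i: "i \<noteq> k" by blast
  have ki: "k \<noteq> i" using i by simp
  obtain j where j: "j \<noteq> k" "j \<noteq> i" "\<forall>s. s = k \<or> s = i \<or> s = j" using third[OF ki] by blast
  have kk: "k \<noteq> i" "k \<noteq> j" "i \<noteq> j" "\<forall>s. s = i \<or> s = j \<or> s = k" using ki j by auto
  have "is_3SS S {0,1,2,3} (pmf_of_set {0,1,2,3}) (fpsi k i j)"
    by (rule restrict[OF face_scheme[OF kk] ke])
  moreover have "log 2 (real (card {0,1,2,3::nat})) = 2" using log4 by simp
  ultimately have "\<exists>R P psi. (2::real) = log 2 (real (card R)) \<and> is_3SS S R P psi"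
    by (intro exI conjI) simp_all
  then show "2 \<in> {log 2 (real (card R)) |R P psi. is_3SS S R P psi}" by (simp only: mem_Collect_eq)
next
  fix y assume "y \<in> {log 2 (real (card R)) |R P psi. is_3SS S R P psi}"
  then obtain R P psi where H: "is_3SS S R P psi" and y: "y = log 2 (real (card R))"
    unfolding mem_Collect_eq by (elim exE conjE) (rule that)
  obtain a b c i j where p: "a \<in> S" "b \<in> S" "c \<in> S" "i \<noteq> j" "a i \<noteq> b i" "\<forall>t. t \<noteq> i \<longrightarrow> a t = b t"
      "b j \<noteq> c j" "\<forall>t. t \<noteq> j \<longrightarrow> b t = c t" using assms(1) unfolding has_path_def by (elim exE conjE) (rule that)
  have "4 \<le> card R" using lower[OF H p] .
  then have "log 2 4 \<le> log 2 (real (card R))" by simp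
  then show "2 \<le> y" using y log4 by simp
qed

lemma t2: "(t::3) \<noteq> 0 \<Longrightarrow> t \<noteq> 1 \<Longrightarrow> t = 2" using three_cases[of t] by blast

theorem mainTheorem8:
  shows "\<forall>S0 \<in> {{trip False False False, trip True False False, trip True True False},
               {trip False False False, trip False False True, trip False True False, trip False True True}}.
           \<forall>S \<in> sym_orbit S0. rho S = 2"
proof -
  have d: "(0::3) \<noteq> 1" "(0::3) \<noteq> 2" "(1::3) \<noteq> 2" by auto
  have p1: "has_path {trip False False False, trip True False False, trip True True False}"
    unfolding has_path_def
    apply (rule exI[of _ "trip False False False"], rule exI[of _ "trip True False False"],
        rule exI[of _ "trip True True False"], rule exI[of _ 0], rule exI[of _ 1])
    using d by (simp add: all3 trip_def)
  have f1: "in_face {trip False False False, trip True False False, trip True True False}"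
    unfolding in_face_def using d by (intro exI[of _ 2] exI[of _ False]) (auto simp: trip_def)
  have p2: "has_path {trip False False False, trip False False True, trip False True False, trip False True True}"
    unfolding has_path_def
    apply (rule exI[of _ "trip False False False"], rule exI[of _ "trip False False True"],
        rule exI[of _ "trip False True True"], rule exI[of _ 2], rule exI[of _ 1])
    using d by (simp add: all3 trip_def)
  have f2: "in_face {trip False False False, trip False False True, trip False True False, trip False True True}"
    unfolding in_face_def using d by (intro exI[of _ 0] exI[of _ False]) (auto simp: trip_def)
  show ?thesis using p1 f1 p2 f2 orbit_inv rho_2 by blast
qed


end
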